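(* In the setting of the homogeneous all-to-all network with coupling $\varepsilon$, $(N-1)\varepsilon<1$, a neuronal differentiable partial reset $R$ and a strictly convex ($U''>0$) dcpd rise function $U$, let $2\le a_1\le N$. If $R'(\zeta)\ge1$ for all $\zeta\in[(a_1-2)\varepsilon,(a_1-1)\varepsilon]$, then an avalanche of size $a_1$ is not invariant under return (for every admissible trigger-invariant firing sequence $\mathcal{F}$ with first avalanche size $a_1$ and every $0<\Delta\phi\le1-U^{-1}(1-\varepsilon)$, $1-M_{\mathcal{F}}(1-\Delta\phi)>\Delta\phi$).
   Context: Rise function: smooth $U:[0,\infty)\to[0,\infty)$, $U'>0$, $U(0)=0$, $U(1)=1$. Partial reset: monotonically increasing $R$ with $R(0)=0$; neuronal if $0\le R(\zeta)\le\zeta$ for $\zeta\ge0$. $H_\varepsilon(\phi)=U^{-1}(U(\phi)+\varepsilon)$, $J_\varepsilon(\phi)=U^{-1}(R(U(\phi)+\varepsilon-1))$, $S_\sigma(\phi)=\phi+\sigma$, $\bigodot_{r=p}^q(S_{\sigma_r}\circ H_{\varepsilon_r}):=S_{\sigma_q}\circ H_{\varepsilon_q}\circ\cdots\circ S_{\sigma_p}\circ H_{\varepsilon_p}$. Network: $N$ units, pulse strength $\varepsilon>0$ between distinct units; phases grow at unit rate; at phase $1$ a unit fires, raising potentials $U(\phi_i)$ of the others by $\varepsilon$; units reaching potential $\ge1$ fire in the same avalanche; non-firing units get phase $H_{k\varepsilon}(\phi_i)$, firing units $J_{k'\varepsilon}(\phi_i)$ ($k$, $k'$ = number of firing units, resp.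 other than itself). Firing sequence $\mathcal{F}=((a_1,\sigma_1),\dots,(a_m,\sigma_m))$: avalanche sizes and inter-avalanche times over one period of the trigger unit of an avalanche of size $a_1$; admissible = realized by some state; trigger invariant = trigger again at phase $1$ at the end. $M_{\mathcal{F}}(\phi)=\big[\bigodot_{r=2}^m(S_{\sigma_r}\circ H_{a_r\varepsilon})\big]\circ S_{\sigma_1}\circ J_{(a_1-1)\varepsilon}(\phi)$. Invariance under return: $M_{\mathcal{F}}(U^{-1}(1-a\varepsilon))\ge U^{-1}(1-a\varepsilon)$ for all $a\in\{1,\dots,a_1-1\}$ and all admissible trigger-invariant $\mathcal{F}$ with first avalanche size $a_1$. dcpd: $\partial_\phi[H_\varepsilon(\phi+\Delta\phi)-H_\varepsilon(\phi)]\le0$ for $0\le\varepsilon\le1$, $0\le\phi\le1$, $0\le\Delta\phi\le U^{-1}(1-\varepsilon)-\phi$. *)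

theory Defs
  imports "HOL-Analysis.Analysis"
begin

definition Uinv :: "(real \<Rightarrow> real) \<Rightarrow> real \<Rightarrow> real" where
  "Uinv U y = the_inv_into {0..} U y"

definition Hmap :: "(real \<Rightarrow> real) \<Rightarrow> real \<Rightarrow> real \<Rightarrow> real" where
  "Hmap U e phi = Uinv U (U phi + e)"

definition Jmap :: "(real \<Rightarrow> real) \<Rightarrow> (real \<Rightarrow> real) \<Rightarrow> real \<Rightarrow> real \<Rightarrow> real" where
  "Jmap U R e phi = Uinv U (R (U phi + e - 1))"

definition Smap :: "real \<Rightarrow> real \<Rightarrow> real" where
  "Smap s phi = phi + s"

text \<open>Composition S_{sigma_q} o H_{a_q eps} o ... o S_{sigma_p} o H_{a_p eps}, applied
  in list order (first list element applied first).\<close>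
fun Mtail :: "(real \<Rightarrow> real) \<Rightarrow> real \<Rightarrow> (nat \<times> real) list \<Rightarrow> real \<Rightarrow> real" where
  "Mtail U e [] phi = phi"
| "Mtail U e ((a, s) # rest) phi = Mtail U e rest (Smap s (Hmap U (real a * e) phi))"

fun Mmap :: "(real \<Rightarrow> real) \<Rightarrow> (real \<Rightarrow> real) \<Rightarrow> real \<Rightarrow> (nat \<times> real) list \<Rightarrow> real \<Rightarrow> real" where
  "Mmap U R e [] phi = phi"
| "Mmap U R e ((a1, s1) # rest) phi =
     Mtail U e rest (Smap s1 (Jmap U R ((real a1 - 1) * e) phi))"

text \<open>Units with phase 1 (potential U 1 = 1) are always in A.\<close>
definition aval_set :: "(real \<Rightarrow> real) \<Rightarrow> nat \<Rightarrow> real \<Rightarrow> (nat \<Rightarrow> real) \<Rightarrow> nat set" where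
  "aval_set U N e phi =
     \<Inter> {A. A \<subseteq> {..<N} \<and> (\<forall>i\<in>{..<N} - A. U (phi i) + real (card A) * e < 1)}"

definition aval_step :: "(real \<Rightarrow> real) \<Rightarrow> (real \<Rightarrow> real) \<Rightarrow> nat \<Rightarrow> real \<Rightarrow> (nat \<Rightarrow> real) \<Rightarrow> (nat \<Rightarrow> real)" where
  "aval_step U R N e phi =
     (let A = aval_set U N e phi; k = card A in
      (\<lambda>i. if i \<in> A then Jmap U R ((real k - 1) * e) (phi i) else Hmap U (real k * e) (phi i)))"

definition wait_time :: "nat \<Rightarrow> (nat \<Rightarrow> real) \<Rightarrow> real" where
  "wait_time N psi = 1 - Max (psi ` {..<N})"

definition next_pre :: "(real \<Rightarrow> real) \<Rightarrow> (real \<Rightarrow> real) \<Rightarrow> nat \<Rightarrow> real \<Rightarrow> (nat \<Rightarrow> real) \<Rightarrow> (nat \<Rightarrow> real)" where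
  "next_pre U R N e phi =
     (let psi = aval_step U R N e phi in (\<lambda>i. psi i + wait_time N psi))"

text \<open>pre_state ... phi r = state just before the (r+1)-th avalanche, starting with the
  avalanche at state phi.\<close>
fun pre_state :: "(real \<Rightarrow> real) \<Rightarrow> (real \<Rightarrow> real) \<Rightarrow> nat \<Rightarrow> real \<Rightarrow> (nat \<Rightarrow> real) \<Rightarrow> nat \<Rightarrow> (nat \<Rightarrow> real)" where
  "pre_state U R N e phi 0 = phi"
| "pre_state U R N e phi (Suc r) = next_pre U R N e (pre_state U R N e phi r)"

text \<open>F is the firing sequence over one period of the trigger unit j, starting from the
  state phi (phases in [0,1]) at which j has phase 1 and triggers the first avalanche:
  the r-th entry records the size of the r-th avalanche and the time until the next one;
  j does not fire in avalanches 2..m and fires again in avalanche m+1.\<close>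
definition realizes ::
  "(real \<Rightarrow> real) \<Rightarrow> (real \<Rightarrow> real) \<Rightarrow> nat \<Rightarrow> real \<Rightarrow> (nat \<Rightarrow> real) \<Rightarrow> nat \<Rightarrow> (nat \<times> real) list \<Rightarrow> bool" where
  "realizes U R N e phi j F \<longleftrightarrow>
     j < N \<and> (\<forall>i<N. 0 \<le> phi i \<and> phi i \<le> 1) \<and> phi j = 1 \<and>
     F \<noteq> [] \<and>
     (\<forall>r<length F.
        fst (F ! r) = card (aval_set U N e (pre_state U R N e phi r)) \<and>
        snd (F ! r) = wait_time N (aval_step U R N e (pre_state U R N e phi r))) \<and>
     (\<forall>r\<in>{1..<length F}. j \<notin> aval_set U N e (pre_state U R N e phi r)) \<and>
     j \<in> aval_set U N e (pre_state U R N e phi (length F))"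

text \<open>Admissible (realized by some state) and trigger invariant (the trigger unit is again
  at phase 1, i.e. triggers, at the end of the period).\<close>
definition admissible_trigger_invariant ::
  "(real \<Rightarrow> real) \<Rightarrow> (real \<Rightarrow> real) \<Rightarrow> nat \<Rightarrow> real \<Rightarrow> (nat \<times> real) list \<Rightarrow> bool" where
  "admissible_trigger_invariant U R N e F \<longleftrightarrow>
     (\<exists>phi j. realizes U R N e phi j F \<and> pre_state U R N e phi (length F) j = 1)"

definition dcpd :: "(real \<Rightarrow> real) \<Rightarrow> bool" where
  "dcpd U \<longleftrightarrow>
     (\<forall>e phi d D. 0 \<le> e \<and> e \<le> 1 \<and> 0 \<le> phi \<and> phi \<le> 1 \<and> 0 \<le> d \<and> d \<le> Uinv U (1 - e) - phi \<and>
        ((\<lambda>x. Hmap U e (x + d) - Hmap U e x) has_real_derivative D) (at phi within {0..})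
        \<longrightarrow> D \<le> 0)"

definition smooth_pos :: "(real \<Rightarrow> real) \<Rightarrow> bool" where
  "smooth_pos U \<longleftrightarrow> (\<forall>n. \<forall>x>0. ((deriv ^^ n) U) differentiable (at x))"

end

theory Submission
  imports Defs
begin

lemma t1: "{0<..} \<subseteq> {0::real..}" by auto
lemma deriv_at:
  assumes "\<forall>x\<ge>0. (f has_real_derivative f' x) (at x within {0..})" "x > 0"
  shows "(f has_real_derivative f' x) (at x)"
proof -
  have a: "(f has_real_derivative f' x) (at x within {0..})" using assms by auto
  have "(f has_real_derivative f' x) (at x within {0<..})"
    by (rule DERIV_subset[OF a t1])
  moreover have "at x within {0<..} = at x" by (rule at_within_open) (use assms(2) in auto)
  ultimately show ?thesis by simp
qed

lemma deriv_cont: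
  assumes "\<forall>x\<ge>0. (f has_real_derivative f' x) (at x within {0..})"
  shows "continuous_on {0..} f"
  using assms by (auto simp: continuous_on_eq_continuous_within intro: DERIV_continuous)

lemma deriv_strict:
  assumes d: "\<forall>x\<ge>0. (f has_real_derivative f' x) (at x within {0..})" and p: "\<forall>x>0. f' x > 0"
    and a: "0 \<le> a" and ab: "a < b"
  shows "f a < f b"
proof (rule DERIV_pos_imp_increasing_open[OF ab])
  fix x assume x: "a < x" "x < b"
  have x0: "x > 0" using x a by linarith
  have "DERIV f x :> f' x" by (rule deriv_at[OF d x0])
  moreover have "f' x > 0" using p x0 by blast
  ultimately show "\<exists>y. DERIV f x :> y \<and> y > 0" by blast
next
  have "{a..b} \<subseteq> {0..}" using a by (simp add: subset_iff)
  then show "continuous_on {a..b} f" using deriv_cont[OF d] continuous_on_subset by blast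
qed

lemma deriv_nonneg:
  assumes d: "\<forall>x\<ge>0. (f has_real_derivative f' x) (at x within {0..})" and p: "\<forall>x. a < x \<and> x < b \<longrightarrow> f' x \<ge> 0"
    and a: "0 \<le> a" and ab: "a \<le> b"
  shows "f a \<le> f b"
proof (rule DERIV_nonneg_imp_increasing_open[OF ab])
  fix x assume x: "a < x" "x < b"
  have x0: "x > 0" using x a by linarith
  have "DERIV f x :> f' x" by (rule deriv_at[OF d x0])
  moreover have "f' x \<ge> 0" using p x by blast
  ultimately show "\<exists>y. DERIV f x :> y \<and> y \<ge> 0" by blast
next
  have "{a..b} \<subseteq> {0..}" using a by (simp add: subset_iff)
  then show "continuous_on {a..b} f" using deriv_cont[OF d] continuous_on_subset by blast
qed

locale riseU =
  fixes U U' U'' :: "real \<Rightarrow> real"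
  assumes U_deriv: "\<forall>x\<ge>0. (U has_real_derivative U' x) (at x within {0..})"
    and U'_deriv: "\<forall>x\<ge>0. (U' has_real_derivative U'' x) (at x within {0..})"
    and U'_pos: "\<forall>x\<ge>0. U' x > 0"
    and U''_pos: "\<forall>x\<ge>0. U'' x > 0"
    and U0: "U 0 = 0"
begin

lemma U_strict: "0 \<le> a \<Longrightarrow> a < b \<Longrightarrow> U a < U b"
  using deriv_strict[OF U_deriv] U'_pos by auto

lemma U'_strict: "0 \<le> a \<Longrightarrow> a < b \<Longrightarrow> U' a < U' b"
  using deriv_strict[OF U'_deriv] U''_pos by auto

lemma U_le_iff: "0 \<le> a \<Longrightarrow> 0 \<le> b \<Longrightarrow> U a \<le> U b \<longleftrightarrow> a \<le> b"
  by (metis U_strict linorder_not_le order_le_less)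

lemma U_less_iff: "0 \<le> a \<Longrightarrow> 0 \<le> b \<Longrightarrow> U a < U b \<longleftrightarrow> a < b"
  by (metis U_strict linorder_not_le order_le_less)

lemma U_nonneg: "0 \<le> a \<Longrightarrow> 0 \<le> U a"
  using U_le_iff[of 0 a] U0 by simp

lemma inj: "inj_on U {0..}"
  by (rule inj_onI) (metis U_le_iff atLeast_iff order_antisym order_refl)

lemma lin_lower: "0 \<le> x \<Longrightarrow> U' 0 * x \<le> U x"
proof -
  assume x: "0 \<le> x"
  have d: "\<forall>t\<ge>0. ((\<lambda>t. U t - U' 0 * t) has_real_derivative U' t - U' 0) (at t within {0..})"
    using U_deriv by (auto intro!: derivative_eq_intros)
  have "(\<lambda>t. U t - U' 0 * t) 0 \<le> (\<lambda>t. U t - U' 0 * t) x"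
    by (rule deriv_nonneg[OF d]) (use U'_strict x in \<open>auto simp: less_imp_le\<close>)
  thus ?thesis using U0 by simp
qed

lemma surj: "0 \<le> y \<Longrightarrow> y \<in> U ` {0..}"
proof -
  assume y: "0 \<le> y"
  define b where "b = y / U' 0"
  have u0: "U' 0 > 0" using U'_pos by simp
  have b: "0 \<le> b" using y u0 by (simp add: b_def)
  have "U' 0 * b = y" using u0 by (simp add: b_def)
  hence "y \<le> U b" using lin_lower[OF b] by simp
  moreover have "continuous_on {0..b} U" using deriv_cont[OF U_deriv] by (rule continuous_on_subset) auto
  ultimately obtain x where "0 \<le> x" "x \<le> b" "U x = y" using IVT'[of U 0 y b] U0 y b by auto
  thus ?thesis by auto
qed

lemma Uinv_U: "0 \<le> x \<Longrightarrow> Uinv U (U x) = x"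
  unfolding Uinv_def using inj by (simp add: the_inv_into_f_f)

lemma U_Uinv: "0 \<le> y \<Longrightarrow> U (Uinv U y) = y"
  unfolding Uinv_def using inj surj by (simp add: f_the_inv_into_f)

lemma Uinv_nonneg: "0 \<le> y \<Longrightarrow> 0 \<le> Uinv U y"
  unfolding Uinv_def using the_inv_into_into[OF inj surj, of y "{0..}"] by auto

lemma Uinv_le_iff: "0 \<le> a \<Longrightarrow> 0 \<le> b \<Longrightarrow> Uinv U a \<le> Uinv U b \<longleftrightarrow> a \<le> b"
  by (metis U_Uinv U_le_iff Uinv_nonneg)

lemma Uinv_less_iff: "0 \<le> a \<Longrightarrow> 0 \<le> b \<Longrightarrow> Uinv U a < Uinv U b \<longleftrightarrow> a < b"
  by (metis U_Uinv U_less_iff Uinv_nonneg)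

lemma convex_strict:
  assumes "0 \<le> y" "y < x" "s > 0"
  shows "U x - U y < U (x + s) - U (y + s)"
proof -
  have "(\<lambda>t. U (t + s) - U t) y < (\<lambda>t. U (t + s) - U t) x"
  proof (rule DERIV_pos_imp_increasing_open[OF assms(2)])
    fix t assume t: "y < t" "t < x"
    have "DERIV U (t + s) :> U' (t + s)" using deriv_at[OF U_deriv] t assms by auto
    hence "DERIV (\<lambda>t. U (t + s)) t :> U' (t + s)"
      using DERIV_shift by blast
    moreover have "DERIV U t :> U' t" using deriv_at[OF U_deriv] t assms by auto
    ultimately have "DERIV (\<lambda>t. U (t + s) - U t) t :> U' (t + s) - U' t"
      by (rule DERIV_diff)
    moreover have "U' (t + s) - U' t > 0" using U'_strict[of t "t+s"] t assms by auto
    ultimately show "\<exists>z. DERIV (\<lambda>t. U (t + s) - U t) t :> z \<and> z > 0" by blast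
  next
    have c: "continuous_on {0..} U" by (rule deriv_cont[OF U_deriv])
    have "continuous_on {y..x} (\<lambda>t. t + s)" by (intro continuous_intros)
    moreover have "(\<lambda>t. t + s) ` {y..x} \<subseteq> {0..}" using assms by auto
    ultimately have "continuous_on {y..x} (\<lambda>t. U (t + s))"
      using continuous_on_compose2[OF c] by blast
    moreover have "continuous_on {y..x} U" using c by (rule continuous_on_subset) (use assms in auto)
    ultimately show "continuous_on {y..x} (\<lambda>t. U (t + s) - U t)" by (intro continuous_intros)
  qed
  thus ?thesis by simp
qed

lemma convex_weak:
  assumes "0 \<le> y" "y \<le> x" "s \<ge> 0"
  shows "U x - U y \<le> U (x + s) - U (y + s)"
  using convex_strict[of y x s] assms by (cases "y = x \<or> s = 0") (auto simp: less_le)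

end


locale net = riseU +
  fixes R :: "real \<Rightarrow> real" and N :: nat and e :: real
  assumes e_pos: "e > 0"
    and coupling: "(real N - 1) * e < 1"
    and U1: "U 1 = 1"
    and R_mono: "mono_on {0..} R"
    and R_neuronal: "\<forall>z\<ge>0. 0 \<le> R z \<and> R z \<le> z"
begin

definition fam where "fam phi = {A. A \<subseteq> {..<N} \<and> (\<forall>i\<in>{..<N} - A. U (phi i) + real (card A) * e < 1)}"

lemma aval_eq: "aval_set U N e phi = \<Inter> (fam phi)"
  unfolding aval_set_def fam_def by simp

lemma full_in: "{..<N} \<in> fam phi" unfolding fam_def by auto

lemma aval_sub: "aval_set U N e phi \<subseteq> {..<N}"
  using full_in aval_eq by auto

lemma aval_card: "card (aval_set U N e phi) \<le> N"
  using card_mono[OF _ aval_sub] by fastforce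

lemma aval_out:
  assumes "i < N" "i \<notin> aval_set U N e phi"
  shows "U (phi i) + real (card (aval_set U N e phi)) * e < 1"
proof -
  obtain B where B: "B \<in> fam phi" "i \<notin> B" using assms aval_eq by auto
  have "aval_set U N e phi \<subseteq> B" using B aval_eq by auto
  moreover have "finite B" using B unfolding fam_def by (auto intro: finite_subset)
  ultimately have "card (aval_set U N e phi) \<le> card B" by (rule card_mono[rotated])
  hence "real (card (aval_set U N e phi)) * e \<le> real (card B) * e" using e_pos by simp
  moreover have "U (phi i) + real (card B) * e < 1" using B assms unfolding fam_def by auto
  ultimately show ?thesis by linarith
qed

lemma aval_in:
  assumes "i \<in> aval_set U N e phi"
  shows "1 \<le> U (phi i) + (real (card (aval_set U N e phi)) - 1) * e"
proof (rule ccontr)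
  let ?A = "aval_set U N e phi"
  assume c: "\<not> ?thesis"
  have fin: "finite ?A" using aval_sub by (rule finite_subset) auto
  have cA: "card (?A - {i}) = card ?A - 1" using assms by simp
  have pos: "card ?A \<ge> 1" using assms fin by (metis One_nat_def Suc_leI card_gt_0_iff empty_iff)
  have rc: "real (card (?A - {i})) = real (card ?A) - 1" using cA pos by simp
  have "?A - {i} \<in> fam phi"
    unfolding fam_def
  proof (intro CollectI conjI ballI)
    show "?A - {i} \<subseteq> {..<N}" using aval_sub by auto
  next
    fix i' assume i': "i' \<in> {..<N} - (?A - {i})"
    show "U (phi i') + real (card (?A - {i})) * e < 1"
    proof (cases "i' = i")
      case True thus ?thesis using c rc by simp
    next
      case False
      hence "U (phi i') + real (card ?A) * e < 1" using aval_out i' by auto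
      thus ?thesis using rc e_pos by (smt (verit) mult_right_mono of_nat_0_le_iff)
    qed
  qed
  hence "?A \<subseteq> ?A - {i}" using aval_eq by (metis Inter_lower)
  thus False using assms by auto
qed

lemma step_bounds:
  assumes ph: "\<forall>i<N. 0 \<le> phi i \<and> phi i \<le> 1" and i: "i < N"
  shows "0 \<le> aval_step U R N e phi i \<and> aval_step U R N e phi i < 1"
proof -
  let ?A = "aval_set U N e phi" let ?k = "card ?A"
  have k: "real ?k \<le> real N" using aval_card by simp
  have Ule: "0 \<le> U (phi i) \<and> U (phi i) \<le> 1" using ph i U_nonneg U_le_iff[of "phi i" 1] U1 by auto
  show ?thesis
  proof (cases "i \<in> ?A")
    case True
    let ?z = "U (phi i) + (real ?k - 1) * e - 1"
    have z0: "0 \<le> ?z" using aval_in[OF True] by simp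
    have "(real ?k - 1) * e \<le> (real N - 1) * e" using k e_pos by simp
    hence z1: "?z < 1" using coupling Ule by linarith
    have Rz': "0 \<le> R ?z \<and> R ?z \<le> ?z" using R_neuronal z0 by blast
    have Rz: "0 \<le> R ?z" "R ?z < 1" using Rz' z1 by linarith+
    have "aval_step U R N e phi i = Uinv U (R ?z)"
      using True by (simp add: aval_step_def Let_def Jmap_def)
    moreover have "Uinv U (R ?z) < Uinv U 1" using Uinv_less_iff Rz by simp
    moreover have "Uinv U 1 = 1" using Uinv_U[of 1] U1 by simp
    ultimately show ?thesis using Uinv_nonneg Rz by simp
  next
    case False
    let ?z = "U (phi i) + real ?k * e"
    have z: "0 \<le> ?z" "?z < 1" using aval_out[OF i False] Ule e_pos by auto
    have "aval_step U R N e phi i = Uinv U ?z"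
      using False by (simp add: aval_step_def Let_def Hmap_def)
    moreover have "Uinv U ?z < Uinv U 1" using Uinv_less_iff z by simp
    moreover have "Uinv U 1 = 1" using Uinv_U[of 1] U1 by simp
    ultimately show ?thesis using Uinv_nonneg z by simp
  qed
qed

lemma wait_pos:
  assumes ph: "\<forall>i<N. 0 \<le> phi i \<and> phi i \<le> 1" and N: "0 < N"
  shows "0 < wait_time N (aval_step U R N e phi)"
    and "\<forall>i<N. 0 \<le> next_pre U R N e phi i \<and> next_pre U R N e phi i \<le> 1"
proof -
  let ?p = "aval_step U R N e phi"
  have ne: "?p ` {..<N} \<noteq> {}" using N by auto
  have "Max (?p ` {..<N}) < 1" using step_bounds[OF ph] ne by (subst Max_less_iff) auto
  thus "0 < wait_time N ?p" by (simp add: wait_time_def)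
  show "\<forall>i<N. 0 \<le> next_pre U R N e phi i \<and> next_pre U R N e phi i \<le> 1"
  proof (intro allI impI)
    fix i assume i: "i < N"
    have "?p i \<le> Max (?p ` {..<N})" using i by (intro Max_ge) auto
    thus "0 \<le> next_pre U R N e phi i \<and> next_pre U R N e phi i \<le> 1"
      using step_bounds[OF ph i] \<open>Max (?p ` {..<N}) < 1\<close>
      by (simp add: next_pre_def wait_time_def Let_def)
  qed
qed

lemma pre_bounds:
  assumes ph: "\<forall>i<N. 0 \<le> phi i \<and> phi i \<le> 1" and N: "0 < N"
  shows "\<forall>i<N. 0 \<le> pre_state U R N e phi r i \<and> pre_state U R N e phi r i \<le> 1"
  by (induction r) (use ph wait_pos[OF _ N] in auto)


lemma Mtail_append: "Mtail U e (xs @ [(a,s)]) p = Smap s (Hmap U (real a * e) (Mtail U e xs p))"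
  by (induction xs arbitrary: p) auto

lemma mtail_gap:
  "\<forall>x\<in>set l. snd x \<ge> 0 \<Longrightarrow> 0 \<le> y \<Longrightarrow> y \<le> x \<Longrightarrow>
    0 \<le> Mtail U e l y \<and> Mtail U e l y \<le> Mtail U e l x \<and> U x - U y \<le> U (Mtail U e l x) - U (Mtail U e l y)"
proof (induction l arbitrary: x y)
  case Nil thus ?case by simp
next
  case (Cons p l)
  obtain a s where p: "p = (a, s)" by (cases p)
  have s: "s \<ge> 0" using Cons.prems p by auto
  let ?x = "Hmap U (real a * e) x" and ?y = "Hmap U (real a * e) y"
  have ae: "real a * e \<ge> 0" using e_pos by simp
  have ux: "U x \<ge> U y" "U y \<ge> 0" using Cons.prems U_le_iff U_nonneg by auto
  have hx: "U ?x = U x + real a * e" "U ?y = U y + real a * e" "0 \<le> ?y" "?y \<le> ?x"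
    unfolding Hmap_def using ux ae U_Uinv Uinv_nonneg Uinv_le_iff by auto
  have c: "U ?x - U ?y \<le> U (?x + s) - U (?y + s)" using convex_weak hx s by blast
  have IH: "0 \<le> Mtail U e l (?y + s) \<and> Mtail U e l (?y + s) \<le> Mtail U e l (?x + s) \<and>
     U (?x + s) - U (?y + s) \<le> U (Mtail U e l (?x + s)) - U (Mtail U e l (?y + s))"
    using Cons.IH[of "?y + s" "?x + s"] Cons.prems hx s by auto
  show ?case using IH c hx unfolding p by (simp add: Smap_def)
qed

lemma trigger_traj:
  assumes rz: "realizes U R N e phi j ((a, s) # rest)"
  shows "n \<le> length rest \<Longrightarrow>
    pre_state U R N e phi (Suc n) j = Mtail U e (take n rest) (Smap s (Jmap U R ((real a - 1) * e) 1))"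
proof (induction n)
  case 0
  let ?A = "aval_set U N e phi"
  have j: "j < N" "phi j = 1" using rz by (auto simp: realizes_def)
  have "j \<in> ?A"
  proof (rule ccontr)
    assume "j \<notin> ?A"
    hence "U (phi j) + real (card ?A) * e < 1" using aval_out j by blast
    moreover have "real (card ?A) * e \<ge> 0" using e_pos by simp
    ultimately show False using j U1 by simp
  qed
  moreover have "card ?A = a" "wait_time N (aval_step U R N e phi) = s"
    using rz unfolding realizes_def by (metis fst_conv snd_conv nth_Cons_0 length_Cons zero_less_Suc pre_state.simps(1))+
  ultimately show ?case using j
    by (simp add: next_pre_def aval_step_def Let_def Smap_def)
next
  case (Suc n)
  let ?ph = "pre_state U R N e phi (Suc n)"
  let ?A = "aval_set U N e ?ph"
  have n: "n < length rest" using Suc.prems by simp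
  have "\<forall>r\<in>{1..<length ((a, s) # rest)}. j \<notin> aval_set U N e (pre_state U R N e phi r)"
    using rz unfolding realizes_def by blast
  hence "j \<notin> ?A" using n by (metis atLeastLessThan_iff length_Cons Suc_le_mono le0 One_nat_def Suc_mono)
  moreover have "\<forall>r<length ((a, s) # rest). fst (((a, s) # rest) ! r) = card (aval_set U N e (pre_state U R N e phi r)) \<and>
        snd (((a, s) # rest) ! r) = wait_time N (aval_step U R N e (pre_state U R N e phi r))"
      using rz unfolding realizes_def by blast
  from spec[OF this, of "Suc n"] n
  have "card ?A = fst (rest ! n)" "wait_time N (aval_step U R N e ?ph) = snd (rest ! n)" by simp_all
  ultimately have "pre_state U R N e phi (Suc (Suc n)) j = Smap (snd (rest ! n)) (Hmap U (real (fst (rest ! n)) * e) (?ph j))"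
    by (simp add: next_pre_def aval_step_def Let_def Smap_def)
  also have "\<dots> = Mtail U e (take (Suc n) rest) (Smap s (Jmap U R ((real a - 1) * e) 1))"
    using Suc.IH n by (simp add: take_Suc_conv_app_nth Mtail_append[of _ "fst (rest ! n)" "snd (rest ! n)", simplified])
  finally show ?case .
qed

end

theorem mainTheorem8:
  fixes U U' U'' R R' :: "real \<Rightarrow> real" and N a1 :: nat and e :: real
  assumes e_pos: "e > 0"
    and coupling: "(real N - 1) * e < 1"
    and U_smooth: "smooth_pos U"
    and U_deriv: "\<forall>x\<ge>0. (U has_real_derivative U' x) (at x within {0..})"
    and U'_deriv: "\<forall>x\<ge>0. (U' has_real_derivative U'' x) (at x within {0..})"
    and U'_pos: "\<forall>x\<ge>0. U' x > 0"
    and U''_pos: "\<forall>x\<ge>0. U'' x > 0"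
    and U_nonneg: "\<forall>x\<ge>0. U x \<ge> 0"
    and U0: "U 0 = 0" and U1: "U 1 = 1"
    and U_dcpd: "dcpd U"
    and R_mono: "mono_on {0..} R"
    and R0: "R 0 = 0"
    and R_neuronal: "\<forall>z\<ge>0. 0 \<le> R z \<and> R z \<le> z"
    and R_deriv: "\<forall>z\<ge>0. (R has_real_derivative R' z) (at z within {0..})"
    and a1: "2 \<le> a1" "a1 \<le> N"
    and R'_ge1: "\<forall>z. (real a1 - 2) * e \<le> z \<and> z \<le> (real a1 - 1) * e \<longrightarrow> R' z \<ge> 1"
  shows "\<forall>F. admissible_trigger_invariant U R N e F \<and> fst (hd F) = a1 \<longrightarrow>
           (\<forall>d. 0 < d \<and> d \<le> 1 - Uinv U (1 - e) \<longrightarrow> 1 - Mmap U R e F (1 - d) > d)"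
proof (intro allI impI)
  fix F d
  assume FA: "admissible_trigger_invariant U R N e F \<and> fst (hd F) = a1"
     and dd: "0 < d \<and> d \<le> 1 - Uinv U (1 - e)"
  interpret net U U' U'' R N e
    by unfold_locales (use e_pos coupling U_deriv U'_deriv U'_pos U''_pos U0 U1 R_mono R_neuronal in auto)
  obtain phi j where rz: "realizes U R N e phi j F" and tr: "pre_state U R N e phi (length F) j = 1"
    using FA unfolding admissible_trigger_invariant_def by blast
  have jN: "j < N" and ph: "\<forall>i<N. 0 \<le> phi i \<and> phi i \<le> 1" and Fne: "F \<noteq> []"
    using rz unfolding realizes_def by auto
  have N0: "0 < N" using jN by simp
  obtain a s rest where F: "F = (a, s) # rest" using Fne by (metis list.exhaust prod.exhaust)
  have a: "a = a1" using FA F by simp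
  have sig: "\<And>r. r < length F \<Longrightarrow> snd (F ! r) > 0"
  proof -
    fix r assume r: "r < length F"
    have "snd (F ! r) = wait_time N (aval_step U R N e (pre_state U R N e phi r))"
      using rz r unfolding realizes_def by auto
    thus "snd (F ! r) > 0" using wait_pos(1)[OF pre_bounds[OF ph N0] N0] by simp
  qed
  have s: "s > 0" using sig[of 0] F by simp
  have rest_nn: "\<forall>x\<in>set rest. snd x \<ge> 0"
  proof
    fix x assume "x \<in> set rest"
    then obtain n where n: "n < length rest" "x = rest ! n" by (metis in_set_conv_nth)
    thus "snd x \<ge> 0" using sig[of "Suc n"] F by (simp add: less_imp_le)
  qed
  let ?J = "\<lambda>p. Jmap U R ((real a - 1) * e) p"
  have M1: "Mtail U e rest (Smap s (?J 1)) = 1"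
    using trigger_traj[OF rz[unfolded F], of "length rest"] tr F by simp
  have Md: "Mmap U R e F (1 - d) = Mtail U e rest (Smap s (?J (1 - d)))" using F by simp
  have e1: "e < 1" using coupling a1 e_pos
    proof -
    have "real N \<ge> 2" using a1 by simp
    hence "e \<le> (real N - 1) * e" using e_pos by (simp add: mult_le_cancel_right1)
    thus ?thesis using coupling by linarith
  qed
  have d0: "0 < d" and d1: "1 - d \<ge> Uinv U (1 - e)" using dd by auto
  have dle1: "0 \<le> 1 - d"  using d1 Uinv_nonneg[of "1 - e"] e1 by linarith
  have U1d: "U (1 - d) \<ge> 1 - e"
    using U_le_iff[OF Uinv_nonneg dle1, of "1 - e"] d1 U_Uinv[of "1 - e"] e1 by simp
  have U1d': "U (1 - d) < 1" using U_strict[OF dle1, of 1] d0 U1 by simp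
  define z1 where "z1 = (real a1 - 1) * e"
  define z2 where "z2 = U (1 - d) + (real a1 - 1) * e - 1"
  have z2lo: "(real a1 - 2) * e \<le> z2" using U1d by (simp add: z2_def algebra_simps)
  have "0 \<le> (real a1 - 2) * e" using a1 e_pos by simp
  hence z20: "0 \<le> z2" using z2lo by linarith
  have z21: "z2 < z1" using U1d' by (simp add: z1_def z2_def)
  have Rgap: "z1 - z2 \<le> R z1 - R z2"
  proof -
    have d: "\<forall>x\<ge>0. ((\<lambda>z. R z - z) has_real_derivative R' x - 1) (at x within {0..})"
      using R_deriv by (auto intro!: derivative_eq_intros)
    have "(\<lambda>z. R z - z) z2 \<le> (\<lambda>z. R z - z) z1"
      by (rule deriv_nonneg[OF d]) (use R'_ge1 z2lo z1_def z20 z21 in \<open>auto\<close>)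
    thus ?thesis by simp
  qed
  have R2: "0 \<le> R z2" "R z2 \<le> R z1"
    using R_neuronal z20 R_mono z21 by (auto simp: mono_on_def)
  have J1: "?J 1 = Uinv U (R z1)" by (simp add: Jmap_def z1_def U1 a)
  have J2: "?J (1 - d) = Uinv U (R z2)" by (simp add: Jmap_def z2_def a)
  have UJ: "U (?J 1) = R z1" "U (?J (1 - d)) = R z2" using J1 J2 U_Uinv R2 by auto
  have Jo: "0 \<le> ?J (1 - d)" "?J (1 - d) < ?J 1"
  proof -
    show "0 \<le> ?J (1 - d)" using J2 Uinv_nonneg R2 by simp
    have "R z2 < R z1" using Rgap z21 by simp
    thus "?J (1 - d) < ?J 1" using J1 J2 Uinv_less_iff R2 by simp
  qed
  have c: "U (?J 1) - U (?J (1 - d)) < U (?J 1 + s) - U (?J (1 - d) + s)"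
    by (rule convex_strict[OF Jo s])
  have g: "0 \<le> Mtail U e rest (?J (1 - d) + s) \<and>
      U (?J 1 + s) - U (?J (1 - d) + s) \<le> U (Mtail U e rest (?J 1 + s)) - U (Mtail U e rest (?J (1 - d) + s))"
    using mtail_gap[OF rest_nn, of "?J (1 - d) + s" "?J 1 + s"] Jo s by auto
  let ?m = "Mtail U e rest (?J (1 - d) + s)"
  have "U ?m < U (1 - d)"
    using g c UJ Rgap M1 U1 by (simp add: Smap_def z1_def z2_def)
  hence "?m < 1 - d" using U_less_iff g dle1 by blast
  thus "1 - Mmap U R e F (1 - d) > d" using Md by (simp add: Smap_def)
qed

end
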